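(* Let $\mathbb{F}$ be a field, $n\ge1$ and $k\ge2$. For every flag $\mathcal{F}$ in $\mathbb{F}^n$ of length $k$, the semigroup $\varphi(\mathcal{F})$ is a $k$-maximal nilpotent subsemigroup of $M(n,\mathbb{F})$. Conversely, every $k$-maximal nilpotent subsemigroup of $M(n,\mathbb{F})$ equals $\varphi(\mathcal{F})$ for some flag $\mathcal{F}$ in $\mathbb{F}^n$ of length $k$.
   Context: $M(n,\mathbb{F})$ is the semigroup of $n\times n$ matrices over $\mathbb{F}$ under multiplication, identified with linear operators on $\mathbb{F}^n$. A flag in $\mathbb{F}^n$ of length $k$ is a chain of subspaces $0=V_0\subsetneq V_1\subsetneq\cdots\subsetneq V_k=\mathbb{F}^n$, and $\varphi(\mathcal{F})=\{a\in M(n,\mathbb{F}) : a(V_i)\subseteq V_{i-1}\text{ for all } i=1,\dots,k\}$. A semigroup $S$ with zero $0$ is nilpotent of nilpotency degree $k$ if $a_1\cdots a_k=0$ for all $a_j\in S$ and some product $b_1\cdots b_{k-1}$ of elements of $S$ is nonzero. A nilpotent subsemigroup of $M(n,\mathbb{F})$ of nilpotency degree $k$ is $k$-maximal if it is not properly contained in any other nilpotent subsemigroup of $M(n,\mathbb{F})$ of nilpotency degree $k$. *)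

theory Defs
  imports "HOL-Analysis.Analysis"
begin

text \<open>Matrices in M(n,F) are elements of type 'a^'n^'n with 'a a field and 'n a finite
  index type with n = CARD('n) elements; they act on F^n = 'a^'n via *v.\<close>

definition mat_prod_list :: "('a::semiring_1^'n^'n) list \<Rightarrow> 'a^'n^'n" where
  "mat_prod_list xs = foldr (**) xs (mat 1)"

definition is_flag :: "nat \<Rightarrow> (nat \<Rightarrow> ('a::field^'n) set) \<Rightarrow> bool" where
  "is_flag k V \<longleftrightarrow>
     (\<forall>i\<le>k. vec.subspace (V i)) \<and> V 0 = {0} \<and> V k = UNIV \<and>
     (\<forall>i\<in>{1..k}. V (i - 1) \<subset> V i)"

definition flag_semigroup :: "nat \<Rightarrow> (nat \<Rightarrow> ('a::field^'n) set) \<Rightarrow> ('a^'n^'n) set" where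
  "flag_semigroup k V = {a. \<forall>i\<in>{1..k}. (\<lambda>v. a *v v) ` V i \<subseteq> V (i - 1)}"

definition is_subsemigroup :: "('a::semiring_1^'n^'n) set \<Rightarrow> bool" where
  "is_subsemigroup S \<longleftrightarrow> (\<forall>a\<in>S. \<forall>b\<in>S. a ** b \<in> S)"

definition nilpotent_deg :: "nat \<Rightarrow> ('a::semiring_1^'n^'n) set \<Rightarrow> bool" where
  "nilpotent_deg k S \<longleftrightarrow> is_subsemigroup S \<and> 0 \<in> S \<and>
     (\<forall>xs. length xs = k \<and> set xs \<subseteq> S \<longrightarrow> mat_prod_list xs = 0) \<and>
     (\<exists>xs. length xs = k - 1 \<and> set xs \<subseteq> S \<and> mat_prod_list xs \<noteq> 0)"

definition k_maximal :: "nat \<Rightarrow> ('a::semiring_1^'n^'n) set \<Rightarrow> bool" where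
  "k_maximal k S \<longleftrightarrow> nilpotent_deg k S \<and>
     \<not> (\<exists>T. nilpotent_deg k T \<and> S \<subset> T)"

end

theory Submission imports Defs begin

lemma rank1:
  fixes W :: "('a::field^'n) set"
  assumes W: "vec.subspace W" and v: "v \<notin> W"
  shows "\<exists>a::'a^'n^'n. (\<forall>x\<in>W. a *v x = 0) \<and> a *v v = u \<and> (\<forall>x. a *v x \<in> vec.span {u})"
proof -
  obtain C where C: "C \<subseteq> W" "vec.independent C" "W \<subseteq> vec.span C"
    by (rule vec.maximal_independent_subset_extend[of "{}" W]) (auto simp: vec.independent_empty)
  have spC: "vec.span C = W" using C W by (meson antisym vec.span_minimal)
  have ind: "vec.independent (insert v C)"
    using C v spC by (simp add: vec.independent_insertI)
  define f where "f = (\<lambda>x::'a^'n. if x = v then u else 0)"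
  obtain g where g: "Vector_Spaces.linear (*s) (*s) g" "\<forall>x\<in>insert v C. g x = f x"
    "range g = vec.span (f ` insert v C)"
    using vec.linear_independent_extend_subspace[OF ind, of f] by blast
  have "f ` insert v C \<subseteq> insert 0 {u}" unfolding f_def by auto
  then have rg: "range g \<subseteq> vec.span {u}"
    using g(3) by (metis vec.span_insert_0 vec.span_mono)
  have gC: "\<forall>x\<in>C. g x = 0" using g(2) v C(1) unfolding f_def by auto
  have gW: "\<forall>x\<in>W. g x = 0"
  proof
    fix x assume "x \<in> W"
    then have "x \<in> vec.span C" using spC by simp
    then show "g x = 0"
      using vec.linear_eq_0_on_span[OF g(1)] gC by blast
  qed
  show ?thesis
    apply (rule exI[of _ "matrix g"])
    using matrix_works[OF g(1)] gW g(2) rg unfolding f_def by auto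
qed

lemma mpl_Nil[simp]: "mat_prod_list [] = mat 1"
  by (simp add: mat_prod_list_def)
lemma mpl_Cons[simp]: "mat_prod_list (x#xs) = x ** mat_prod_list xs"
  by (simp add: mat_prod_list_def)
lemma mpl_append: "mat_prod_list (xs@ys) = mat_prod_list xs ** mat_prod_list ys"
  by (induction xs) (auto simp: matrix_mul_assoc)
lemma mpl_snoc_v: "mat_prod_list (xs@[a]) *v v = mat_prod_list xs *v (a *v v)"
  by (simp add: mpl_append matrix_vector_mul_assoc)
lemma mpl_Cons_v: "mat_prod_list (a#xs) *v v = a *v (mat_prod_list xs *v v)"
  by (simp add: matrix_vector_mul_assoc)

lemma mat_zero_iff: "(A::'a::semiring_1^'n^'m) = 0 \<longleftrightarrow> (\<forall>x. A *v x = 0)"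
  by (simp add: matrix_eq[of A 0])

lemma long_zero:
  assumes "nilpotent_deg k S" "set xs \<subseteq> S" "length xs \<ge> k"
  shows "mat_prod_list xs = 0"
proof -
  have "mat_prod_list (take k xs) = 0"
  proof -
    have "length (take k xs) = k \<and> set (take k xs) \<subseteq> S"
      using assms(2,3) set_take_subset[of k xs] by auto
    then show ?thesis using assms(1) unfolding nilpotent_deg_def by blast
  qed
  then show ?thesis
    using mpl_append[of "take k xs" "drop k xs"] by simp
qed

context
  fixes k :: nat and V :: "nat \<Rightarrow> ('a::field^'n) set"
  assumes F: "is_flag k V"
begin

lemma fs_apply: "a \<in> flag_semigroup k V \<Longrightarrow> 1 \<le> i \<Longrightarrow> i \<le> k \<Longrightarrow> x \<in> V i \<Longrightarrow> a *v x \<in> V (i - 1)"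
  unfolding flag_semigroup_def by (auto simp: image_subset_iff)

lemma fl_sub: "i \<le> k \<Longrightarrow> vec.subspace (V i)"
  using F unfolding is_flag_def by auto
lemma fl_0: "V 0 = {0}" using F unfolding is_flag_def by auto
lemma fl_k: "V k = UNIV" using F unfolding is_flag_def by auto
lemma fl_strict: "1 \<le> i \<Longrightarrow> i \<le> k \<Longrightarrow> V (i - 1) \<subset> V i"
  using F unfolding is_flag_def by auto
lemma fl_mono: "i \<le> j \<Longrightarrow> j \<le> k \<Longrightarrow> V i \<subseteq> V j"
proof (induction j)
  case 0 then show ?case by simp
next
  case (Suc j)
  show ?case
  proof (cases "i = Suc j")
    case False
    then have "V i \<subseteq> V j" using Suc by auto
    also have "V j \<subseteq> V (Suc j)" using fl_strict[of "Suc j"] Suc by auto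
    finally show ?thesis .
  qed simp
qed
lemma fl_zero_in: "i \<le> k \<Longrightarrow> 0 \<in> V i"
  using fl_mono[of 0 i] fl_0 by auto

lemma step_down:
  assumes j: "1 \<le> j" "j \<le> k" and v: "v \<notin> V j"
  shows "\<exists>a\<in>flag_semigroup k V. a *v v \<notin> V (j - 1)"
proof -
  obtain w where w: "w \<in> V j" "w \<notin> V (j - 1)" using fl_strict[OF j] by blast
  obtain a :: "'a^'n^'n" where a: "\<forall>x\<in>V j. a *v x = 0" "a *v v = w" "\<forall>x. a *v x \<in> vec.span {w}"
    using rank1[OF fl_sub[OF j(2)] v] by blast
  have spw: "vec.span {w} \<subseteq> V j" using w(1) fl_sub[OF j(2)] by (simp add: vec.span_minimal)
  have "a \<in> flag_semigroup k V"
    unfolding flag_semigroup_def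
  proof (intro CollectI ballI subsetI)
    fix i y assume i: "i \<in> {1..k}" and y: "y \<in> (\<lambda>v. a *v v) ` V i"
    then obtain x where x: "x \<in> V i" "y = a *v x" by auto
    show "y \<in> V (i - 1)"
    proof (cases "i \<le> j")
      case True
      then have "x \<in> V j" using fl_mono j x by auto
      then show ?thesis using a x fl_zero_in i by auto
    next
      case False
      then have "V j \<subseteq> V (i - 1)" using fl_mono i by auto
      then show ?thesis using a(3) spw x by blast
    qed
  qed
  then show ?thesis using a w by auto
qed

lemma lemD:
  "j \<le> k \<Longrightarrow> v \<notin> V j \<Longrightarrow> \<exists>xs. length xs = j \<and> set xs \<subseteq> flag_semigroup k V \<and> mat_prod_list xs *v v \<noteq> 0"
proof (induction j arbitrary: v)
  case 0
  then show ?case using fl_0 by (intro exI[of _ "[]"]) auto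
next
  case (Suc j)
  obtain a where a: "a \<in> flag_semigroup k V" "a *v v \<notin> V j"
    using step_down[of "Suc j" v] Suc.prems by auto
  obtain xs where xs: "length xs = j" "set xs \<subseteq> flag_semigroup k V" "mat_prod_list xs *v (a *v v) \<noteq> 0"
    using Suc.IH[of "a *v v"] Suc.prems a by auto
  show ?case
    by (rule exI[of _ "xs @ [a]"]) (use xs a in \<open>auto simp: mpl_snoc_v\<close>)
qed

lemma step_up:
  assumes p: "p < k" and v: "v \<in> V p"
  shows "\<exists>a\<in>flag_semigroup k V. \<exists>u\<in>V (Suc p). a *v u = v"
proof -
  obtain u where u: "u \<in> V (Suc p)" "u \<notin> V p" using fl_strict[of "Suc p"] p by auto
  obtain a :: "'a^'n^'n" where a: "\<forall>x\<in>V p. a *v x = 0" "a *v u = v" "\<forall>x. a *v x \<in> vec.span {v}"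
    using rank1[OF fl_sub[of p] u(2), of v] p by auto
  have spv: "vec.span {v} \<subseteq> V p" using v fl_sub p by (simp add: vec.span_minimal)
  have "a \<in> flag_semigroup k V"
    unfolding flag_semigroup_def
  proof (intro CollectI ballI subsetI)
    fix i y assume i: "i \<in> {1..k}" and y: "y \<in> (\<lambda>v. a *v v) ` V i"
    then obtain x where x: "x \<in> V i" "y = a *v x" by auto
    show "y \<in> V (i - 1)"
    proof (cases "i \<le> p")
      case True
      then have "x \<in> V p" using fl_mono[of i p] p x by auto
      then show ?thesis using a x fl_zero_in i by auto
    next
      case False
      then have "V p \<subseteq> V (i - 1)" using fl_mono i by auto
      then show ?thesis using a(3) spv x by blast
    qed
  qed
  then show ?thesis using a u by auto
qed

lemma lemU:
  "p + d = k \<Longrightarrow> v \<in> V p \<Longrightarrow> \<exists>w xs. length xs = d \<and> set xs \<subseteq> flag_semigroup k V \<and> mat_prod_list xs *v w = v"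
proof (induction d arbitrary: p v)
  case 0
  then show ?case by (intro exI[of _ v] exI[of _ "[]"]) auto
next
  case (Suc d)
  obtain a u where a: "a \<in> flag_semigroup k V" "u \<in> V (Suc p)" "a *v u = v"
    using step_up[of p v] Suc.prems by auto
  obtain w xs where xs: "length xs = d" "set xs \<subseteq> flag_semigroup k V" "mat_prod_list xs *v w = u"
    using Suc.IH[of "Suc p" u] Suc.prems a by auto
  show ?case
    by (rule exI[of _ w], rule exI[of _ "a # xs"]) (use xs a in \<open>auto simp: matrix_vector_mul_assoc\<close>)
qed

lemma prod_maps:
  "set xs \<subseteq> flag_semigroup k V \<Longrightarrow> i \<le> k \<Longrightarrow> length xs \<le> i \<Longrightarrow> x \<in> V i \<Longrightarrow>
   mat_prod_list xs *v x \<in> V (i - length xs)"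
proof (induction xs)
  case Nil then show ?case by simp
next
  case (Cons a xs)
  have 1: "mat_prod_list xs *v x \<in> V (i - length xs)" using Cons by auto
  have "i - length xs \<in> {1..k}" using Cons.prems by auto
  then have "a *v (mat_prod_list xs *v x) \<in> V (i - length xs - 1)"
    using Cons.prems(1) 1 fs_apply[of a "i - length xs"] by auto
  then show ?case by (simp add: matrix_vector_mul_assoc)
qed

lemma flag_nil:
  assumes k: "k \<ge> 2"
  shows "nilpotent_deg k (flag_semigroup k V)"
  unfolding nilpotent_deg_def
proof (intro conjI allI impI)
  show "is_subsemigroup (flag_semigroup k V)"
    unfolding is_subsemigroup_def
  proof (intro ballI)
    fix a b assume a: "a \<in> flag_semigroup k V" and b: "b \<in> flag_semigroup k V"
    have "(\<lambda>v. (a ** b) *v v) ` V i \<subseteq> V (i - 1)" if i: "i \<in> {1..k}" for i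
    proof
      fix y assume "y \<in> (\<lambda>v. (a ** b) *v v) ` V i"
      then obtain x where x: "x \<in> V i" "y = a *v (b *v x)" by (auto simp: matrix_vector_mul_assoc)
      have bx: "b *v x \<in> V (i - 1)" using b x i unfolding flag_semigroup_def by blast
      show "y \<in> V (i - 1)"
      proof (cases "i = 1")
        case True
        then show ?thesis using bx fl_0 x by simp
      next
        case False
        then have "a *v (b *v x) \<in> V (i - 1 - 1)" using a bx i fs_apply[of a "i - 1"] by auto
        moreover have "V (i - 1 - 1) \<subseteq> V (i - 1)" 
        proof -
          have "i - 1 - 1 \<le> i - 1" "i - 1 \<le> k" using i by auto
          then show ?thesis by (rule fl_mono)
        qed
        ultimately show ?thesis using x by auto
      qed
    qed
    then show "a ** b \<in> flag_semigroup k V" unfolding flag_semigroup_def by auto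
  qed
  show "0 \<in> flag_semigroup k V"
    unfolding flag_semigroup_def using fl_zero_in by auto
  fix xs :: "('a^'n^'n) list"
  assume xs: "length xs = k \<and> set xs \<subseteq> flag_semigroup k V"
  have "\<forall>x. mat_prod_list xs *v x = 0"
    using prod_maps[of xs k] xs fl_k fl_0 by auto
  then show "mat_prod_list xs = 0" by (simp add: mat_zero_iff)
next
  obtain v where "v \<notin> V (k - 1)" using fl_strict[of k] k fl_k by auto
  then obtain xs where "length xs = k - 1" "set xs \<subseteq> flag_semigroup k V" "mat_prod_list xs *v v \<noteq> 0"
    using lemD[of "k - 1" v] by auto
  then show "\<exists>xs. length xs = k - 1 \<and> set xs \<subseteq> flag_semigroup k V \<and> mat_prod_list xs \<noteq> 0"
    by (metis mat_zero_iff)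
qed

lemma flag_max:
  assumes T: "nilpotent_deg k T" and sub: "flag_semigroup k V \<subseteq> T"
  shows "T \<subseteq> flag_semigroup k V"
proof
  fix t assume t: "t \<in> T"
  show "t \<in> flag_semigroup k V"
  proof (rule ccontr)
    assume "t \<notin> flag_semigroup k V"
    then obtain i x where i: "i \<in> {1..k}" and x: "x \<in> V i" and tx: "t *v x \<notin> V (i - 1)"
      unfolding flag_semigroup_def by (auto simp: image_subset_iff)
    have "\<exists>ys. length ys = i - 1 \<and> set ys \<subseteq> flag_semigroup k V \<and> mat_prod_list ys *v (t *v x) \<noteq> 0"
      using lemD[of "i - 1" "t *v x"] i tx by auto
    then obtain ys where ys: "length ys = i - 1" "set ys \<subseteq> flag_semigroup k V" "mat_prod_list ys *v (t *v x) \<noteq> 0"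
      by blast
    obtain w zs where zs: "length zs = k - i" "set zs \<subseteq> flag_semigroup k V" "mat_prod_list zs *v w = x"
      using lemU[of i "k - i" x] i x by auto
    let ?L = "ys @ t # zs"
    have "mat_prod_list ?L *v w = mat_prod_list ys *v (t *v x)"
      using zs by (simp add: mpl_append matrix_vector_mul_assoc[symmetric])
    moreover have "mat_prod_list ?L = 0"
      by (rule long_zero[OF T]) (use ys zs t sub i in auto)
    ultimately show False using ys by simp
  qed
qed

end

definition kchain :: "('a::field^'n^'n) set \<Rightarrow> nat \<Rightarrow> ('a^'n) set" where
  "kchain S j = {v. \<forall>xs. length xs = j \<and> set xs \<subseteq> S \<longrightarrow> mat_prod_list xs *v v = 0}"

lemma kchain_sub: "vec.subspace (kchain S j)"
  unfolding vec.subspace_def kchain_def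
  by (auto simp: vec.add vec.scale)

lemma kchain_0: "kchain S 0 = {0}"
  unfolding kchain_def by auto

lemma kchain_k: "nilpotent_deg k S \<Longrightarrow> kchain S k = UNIV"
  unfolding kchain_def nilpotent_deg_def by auto

lemma kchain_map: "s \<in> S \<Longrightarrow> v \<in> kchain S (Suc j) \<Longrightarrow> s *v v \<in> kchain S j"
  unfolding kchain_def
proof (intro CollectI allI impI)
  fix xs assume s: "s \<in> S" and v: "v \<in> {v. \<forall>xs. length xs = Suc j \<and> set xs \<subseteq> S \<longrightarrow> mat_prod_list xs *v v = 0}"
    and xs: "length xs = j \<and> set xs \<subseteq> S"
  have "mat_prod_list (xs @ [s]) *v v = 0" using v xs s by auto
  then show "mat_prod_list xs *v (s *v v) = 0" by (simp add: mpl_snoc_v)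
qed

lemma kchain_mono1: "kchain S j \<subseteq> kchain S (Suc j)"
proof
  fix v assume v: "v \<in> kchain S j"
  show "v \<in> kchain S (Suc j)"
    unfolding kchain_def
  proof (intro CollectI allI impI)
    fix xs assume xs: "length xs = Suc j \<and> set xs \<subseteq> S"
    then obtain a ys where "xs = a # ys" by (cases xs) auto
    then show "mat_prod_list xs *v v = 0"
      using v xs unfolding kchain_def by (auto simp: matrix_vector_mul_assoc[symmetric])
  qed
qed

lemma kchain_stable1:
  assumes "kchain S j = kchain S (Suc j)"
  shows "kchain S (Suc j) = kchain S (Suc (Suc j))"
proof
  show "kchain S (Suc j) \<subseteq> kchain S (Suc (Suc j))" by (rule kchain_mono1)
  show "kchain S (Suc (Suc j)) \<subseteq> kchain S (Suc j)"
  proof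
    fix v assume v: "v \<in> kchain S (Suc (Suc j))"
    show "v \<in> kchain S (Suc j)"
      unfolding kchain_def
    proof (intro CollectI allI impI)
      fix xs assume xs: "length xs = Suc j \<and> set xs \<subseteq> S"
      then obtain ys s where ys: "xs = ys @ [s]" by (cases xs rule: rev_cases) auto
      then have s: "s \<in> S" and ysS: "set ys \<subseteq> S" "length ys = j" using xs by auto
      have "s *v v \<in> kchain S j" using kchain_map[OF s v] assms by simp
      then show "mat_prod_list xs *v v = 0"
        using ys ysS unfolding kchain_def by (auto simp: mpl_snoc_v)
    qed
  qed
qed

lemma kchain_stable:
  assumes "kchain S j = kchain S (Suc j)" and "j \<le> m"
  shows "kchain S m = kchain S j"
proof -
  have "kchain S m = kchain S j \<and> kchain S (Suc m) = kchain S j"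
    using assms(2)
  proof (induction m rule: dec_induct)
    case base then show ?case using assms(1) by simp
  next
    case (step m)
    then show ?case using kchain_stable1[of S m] by simp
  qed
  then show ?thesis by simp
qed


lemma kchain_flag:
  assumes N: "nilpotent_deg k S" and k: "k \<ge> 2"
  shows "is_flag k (kchain S) \<and> S \<subseteq> flag_semigroup k (kchain S)"
proof -
  have strict: "kchain S (i - 1) \<subset> kchain S i" if i: "i \<in> {1..k}" for i
  proof -
    have si: "Suc (i - 1) = i" using i by simp
    have sub: "kchain S (i - 1) \<subseteq> kchain S i" using kchain_mono1[of S "i - 1"] si by simp
    have "kchain S (i - 1) \<noteq> kchain S i"
    proof
      assume eq: "kchain S (i - 1) = kchain S i"
      then have eq': "kchain S (i - 1) = kchain S (Suc (i - 1))" using si by simp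
      have l1: "i - 1 \<le> k - 1" "i - 1 \<le> k" using i by auto
      have "kchain S (k - 1) = kchain S (i - 1)" by (rule kchain_stable[OF eq' l1(1)])
      moreover have "kchain S k = kchain S (i - 1)" by (rule kchain_stable[OF eq' l1(2)])
      ultimately have "kchain S (k - 1) = UNIV" using kchain_k[OF N] by simp
      then have "\<forall>xs. length xs = k - 1 \<and> set xs \<subseteq> S \<longrightarrow> mat_prod_list xs = 0"
        unfolding kchain_def mat_zero_iff by blast
      then show False using N unfolding nilpotent_deg_def by blast
    qed
    then show ?thesis using sub by blast
  qed
  have F: "is_flag k (kchain S)"
    unfolding is_flag_def
  proof (intro conjI allI impI ballI)
    show "vec.subspace (kchain S i)" for i by (rule kchain_sub)
    show "kchain S 0 = {0}" by (rule kchain_0)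
    show "kchain S k = UNIV" by (rule kchain_k[OF N])
    show "kchain S (i - 1) \<subset> kchain S i" if "i \<in> {1..k}" for i using strict that by blast
  qed
  have "S \<subseteq> flag_semigroup k (kchain S)"
  proof
    fix s assume s: "s \<in> S"
    show "s \<in> flag_semigroup k (kchain S)"
      unfolding flag_semigroup_def
    proof (intro CollectI ballI subsetI)
      fix i y assume i: "i \<in> {1..k}" and y: "y \<in> (\<lambda>v. s *v v) ` kchain S i"
      have si: "Suc (i - 1) = i" using i by simp
      obtain v where v: "v \<in> kchain S i" "y = s *v v" using y by blast
      have "v \<in> kchain S (Suc (i - 1))" using v(1) si by simp
      then show "y \<in> kchain S (i - 1)" using kchain_map[OF s] v(2) by blast
    qed
  qed
  then show ?thesis using F by blast
qed

theorem proposition8: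
  fixes k :: nat
  assumes "k \<ge> 2"
  shows "(\<forall>V :: nat \<Rightarrow> ('a::field^'n) set.
            is_flag k V \<longrightarrow> k_maximal k (flag_semigroup k V)) \<and>
         (\<forall>S :: ('a::field^'n^'n) set. k_maximal k S \<longrightarrow>
            (\<exists>V. is_flag k V \<and> S = flag_semigroup k V))"
proof (intro conjI allI impI)
  fix V :: "nat \<Rightarrow> ('a::field^'n) set"
  assume F: "is_flag k V"
  show "k_maximal k (flag_semigroup k V)"
    unfolding k_maximal_def
  proof (intro conjI notI)
    show "nilpotent_deg k (flag_semigroup k V)" using flag_nil[OF F assms] .
    assume "\<exists>T. nilpotent_deg k T \<and> flag_semigroup k V \<subset> T"
    then obtain T where "nilpotent_deg k T" "flag_semigroup k V \<subset> T" by blast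
    then show False using flag_max[OF F, of T] by blast
  qed
next
  fix S :: "('a::field^'n^'n) set"
  assume M: "k_maximal k S"
  then have N: "nilpotent_deg k S" unfolding k_maximal_def by blast
  have F: "is_flag k (kchain S)" and sub: "S \<subseteq> flag_semigroup k (kchain S)"
    using kchain_flag[OF N assms] by auto
  have "nilpotent_deg k (flag_semigroup k (kchain S))" using flag_nil[OF F assms] .
  moreover have "\<not> S \<subset> flag_semigroup k (kchain S)" if "nilpotent_deg k (flag_semigroup k (kchain S))"
    using M that unfolding k_maximal_def by blast
  ultimately have "S = flag_semigroup k (kchain S)"
    using sub by blast
  then show "\<exists>V. is_flag k V \<and> S = flag_semigroup k V" using F by blast
qed

end
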